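(* Assume the setting in the context. For every choice of real coefficients $\{(\alpha_k,\beta_k)\}_{k=2}^K$ with $\alpha_k+\beta_k=1$ for all $k=2,\dots,K$, and for every $x\in\mathbb{R}^N$, $$T(x)=\sum_{k=1}^K L_k(x_{\mathcal C_k}).$$
   Context: Setting. Let $V=\{1,\dots,N\}$ and let $\mathcal G=(V,\mathcal E)$ be an undirected decomposable graph whose maximal cliques form a perfect sequence $\mathcal C_1,\dots,\mathcal C_K$. For $k=1,\dots,K$ define the histories $\mathcal H_k=\mathcal C_1\cup\cdots\cup\mathcal C_k$. For $k=2,\dots,K$ define the separators $\mathcal S_k=\mathcal H_{k-1}\cap\mathcal C_k$. Perfectness means that for each $k\ge2$ there is $j<k$ with $\mathcal S_k\subseteq\mathcal C_j$. For $k=2,\dots,K$ let $q(k)=\min\{j:\mathcal S_k\subseteq\mathcal C_j\}$, so that $q(k)<k$. For $j=1,\dots,K$ let $\mathcal Q_j=\{k\in\{2,\dots,K\}:q(k)=j\}$. Let $\Sigma\in\mathbb R^{N\times N}$ be symmetric positive definite and Markov with respect to $\mathcal G$, i.e. $(\Sigma^{-1})_{i,j}=0$ whenever $i\neq j$ and $\{i,j\}\notin\mathcal E$. Notation. For $U\subseteq V$: - $\Sigma_U$ is the principal submatrix of $\Sigma$ with rows and columns indexed by $U$; - $I_U$ is the $|U|\times|U|$ identity matrix; - $x_U$ is the subvector of $x$ with entries indexed by $U$. For $U\subseteq W\subseteq V$ and a matrix $A$ indexed by $U$, $[A]^W$ is the $|W|\times|W|$ matrix indexed by $W$ that equals $A$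 on $U\times U$ and is $0$ elsewhere. Test statistic. Define $T(x)=x^Tx-x^T\Sigma^{-1}x-\ln\det\Sigma$. Local matrices and constants. Given real coefficients $\alpha_k,\beta_k$ ($k=2,\dots,K$), define $$J_1=\big(I_{\mathcal C_1}-\Sigma_{\mathcal C_1}^{-1}\big)-\sum_{j\in\mathcal Q_1}\beta_j\big[I_{\mathcal S_j}-\Sigma_{\mathcal S_j}^{-1}\big]^{\mathcal C_1},$$ and, for $k=2,\dots,K$, $$J_k=\big(I_{\mathcal C_k}-\Sigma_{\mathcal C_k}^{-1}\big)-\sum_{j\in\mathcal Q_k}\beta_j\big[I_{\mathcal S_j}-\Sigma_{\mathcal S_j}^{-1}\big]^{\mathcal C_k}-\alpha_k\big[I_{\mathcal S_k}-\Sigma_{\mathcal S_k}^{-1}\big]^{\mathcal C_k}.$$ Define $$e_1=\ln\det\Sigma_{\mathcal C_1}-\sum_{j\in\mathcal Q_1}\beta_j\ln\det\Sigma_{\mathcal S_j},$$ and, for $k\ge2$, $$e_k=\ln\det\Sigma_{\mathcal C_k}-\sum_{j\in\mathcal Q_k}\beta_j\ln\det\Sigma_{\mathcal S_j}-\alpha_k\ln\det\Sigma_{\mathcal S_k}.$$ The local statistics are $L_k(x_{\mathcal C_k})=x_{\mathcal C_k}^TJ_kx_{\mathcal C_k}-e_k$. *)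

theory Defs
  imports "HOL-Analysis.Analysis"
begin

text \<open>Matrices indexed by natural numbers, represented as functions nat => nat => real;
  a matrix "indexed by U" is one whose relevant entries are those in U x U.\<close>

definition idm :: "nat \<Rightarrow> nat \<Rightarrow> real" where
  "idm i j = (if i = j then 1 else 0)"

definition subm :: "nat set \<Rightarrow> (nat \<Rightarrow> nat \<Rightarrow> real) \<Rightarrow> nat \<Rightarrow> nat \<Rightarrow> real" where
  "subm U A i j = (if i \<in> U \<and> j \<in> U then A i j else 0)"

definition padm :: "nat set \<Rightarrow> nat set \<Rightarrow> (nat \<Rightarrow> nat \<Rightarrow> real) \<Rightarrow> nat \<Rightarrow> nat \<Rightarrow> real" where
  "padm U W A i j = (if i \<in> W \<and> j \<in> W then (if i \<in> U \<and> j \<in> U then A i j else 0) else 0)"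

definition det_on :: "nat set \<Rightarrow> (nat \<Rightarrow> nat \<Rightarrow> real) \<Rightarrow> real" where
  "det_on U A = (\<Sum>p\<in>{p. p permutes U}. of_int (sign p) * (\<Prod>i\<in>U. A i (p i)))"

definition inv_on :: "nat set \<Rightarrow> (nat \<Rightarrow> nat \<Rightarrow> real) \<Rightarrow> nat \<Rightarrow> nat \<Rightarrow> real" where
  "inv_on U A = (SOME B. (\<forall>i\<in>U. \<forall>j\<in>U. (\<Sum>k\<in>U. A i k * B k j) = idm i j)
                      \<and> (\<forall>i j. (i \<notin> U \<or> j \<notin> U) \<longrightarrow> B i j = 0))"

definition qf :: "nat set \<Rightarrow> (nat \<Rightarrow> nat \<Rightarrow> real) \<Rightarrow> (nat \<Rightarrow> real) \<Rightarrow> real" where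
  "qf U A x = (\<Sum>i\<in>U. \<Sum>j\<in>U. x i * A i j * x j)"

definition sym_pos_def_on :: "nat set \<Rightarrow> (nat \<Rightarrow> nat \<Rightarrow> real) \<Rightarrow> bool" where
  "sym_pos_def_on U A \<longleftrightarrow> (\<forall>i\<in>U. \<forall>j\<in>U. A i j = A j i)
      \<and> (\<forall>x. (\<exists>i\<in>U. x i \<noteq> 0) \<longrightarrow> qf U A x > 0)"

definition ugraph :: "nat set \<Rightarrow> nat set set \<Rightarrow> bool" where
  "ugraph V E \<longleftrightarrow> (\<forall>e\<in>E. \<exists>i\<in>V. \<exists>j\<in>V. i \<noteq> j \<and> e = {i, j})"

definition clique :: "nat set \<Rightarrow> nat set set \<Rightarrow> nat set \<Rightarrow> bool" where
  "clique V E W \<longleftrightarrow> W \<subseteq> V \<and> (\<forall>i\<in>W. \<forall>j\<in>W. i \<noteq> j \<longrightarrow> {i, j} \<in> E)"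

definition max_clique :: "nat set \<Rightarrow> nat set set \<Rightarrow> nat set \<Rightarrow> bool" where
  "max_clique V E W \<longleftrightarrow> clique V E W \<and> (\<forall>W'. clique V E W' \<and> W \<subseteq> W' \<longrightarrow> W' = W)"

definition hist :: "(nat \<Rightarrow> nat set) \<Rightarrow> nat \<Rightarrow> nat set" where
  "hist C k = (\<Union>j\<in>{1..k}. C j)"

definition sep :: "(nat \<Rightarrow> nat set) \<Rightarrow> nat \<Rightarrow> nat set" where
  "sep C k = hist C (k - 1) \<inter> C k"

definition perfect_max_clique_seq :: "nat set \<Rightarrow> nat set set \<Rightarrow> (nat \<Rightarrow> nat set) \<Rightarrow> nat \<Rightarrow> bool" where
  "perfect_max_clique_seq V E C K \<longleftrightarrow> 1 \<le> K \<and> inj_on C {1..K}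
      \<and> C ` {1..K} = {W. max_clique V E W}
      \<and> (\<forall>k\<in>{2..K}. \<exists>j\<in>{1..<k}. sep C k \<subseteq> C j)"

definition qidx :: "(nat \<Rightarrow> nat set) \<Rightarrow> nat \<Rightarrow> nat" where
  "qidx C k = (LEAST j. 1 \<le> j \<and> sep C k \<subseteq> C j)"

definition Qset :: "(nat \<Rightarrow> nat set) \<Rightarrow> nat \<Rightarrow> nat \<Rightarrow> nat set" where
  "Qset C K j = {k\<in>{2..K}. qidx C k = j}"

definition markov :: "nat set \<Rightarrow> nat set set \<Rightarrow> (nat \<Rightarrow> nat \<Rightarrow> real) \<Rightarrow> bool" where
  "markov V E S \<longleftrightarrow> (\<forall>i\<in>V. \<forall>j\<in>V. i \<noteq> j \<and> {i, j} \<notin> E \<longrightarrow> inv_on V (subm V S) i j = 0)"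

definition IminusInv :: "(nat \<Rightarrow> nat \<Rightarrow> real) \<Rightarrow> nat set \<Rightarrow> nat \<Rightarrow> nat \<Rightarrow> real" where
  "IminusInv S U i j = (if i \<in> U \<and> j \<in> U then idm i j - inv_on U (subm U S) i j else 0)"

definition ldet :: "(nat \<Rightarrow> nat \<Rightarrow> real) \<Rightarrow> nat set \<Rightarrow> real" where
  "ldet S U = ln (det_on U (subm U S))"

definition Tstat :: "nat set \<Rightarrow> (nat \<Rightarrow> nat \<Rightarrow> real) \<Rightarrow> (nat \<Rightarrow> real) \<Rightarrow> real" where
  "Tstat V S x = qf V idm x - qf V (inv_on V (subm V S)) x - ldet S V"

definition Jloc :: "(nat \<Rightarrow> nat set) \<Rightarrow> nat \<Rightarrow> (nat \<Rightarrow> nat \<Rightarrow> real) \<Rightarrow> (nat \<Rightarrow> real) \<Rightarrow> (nat \<Rightarrow> real)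
     \<Rightarrow> nat \<Rightarrow> nat \<Rightarrow> nat \<Rightarrow> real" where
  "Jloc C K S \<alpha> \<beta> k i j =
     IminusInv S (C k) i j
     - (\<Sum>l\<in>Qset C K k. \<beta> l * padm (sep C l) (C k) (IminusInv S (sep C l)) i j)
     - (if k \<ge> 2 then \<alpha> k * padm (sep C k) (C k) (IminusInv S (sep C k)) i j else 0)"

definition eloc :: "(nat \<Rightarrow> nat set) \<Rightarrow> nat \<Rightarrow> (nat \<Rightarrow> nat \<Rightarrow> real) \<Rightarrow> (nat \<Rightarrow> real) \<Rightarrow> (nat \<Rightarrow> real)
     \<Rightarrow> nat \<Rightarrow> real" where
  "eloc C K S \<alpha> \<beta> k =
     ldet S (C k) - (\<Sum>l\<in>Qset C K k. \<beta> l * ldet S (sep C l))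
     - (if k \<ge> 2 then \<alpha> k * ldet S (sep C k) else 0)"

definition Lloc :: "(nat \<Rightarrow> nat set) \<Rightarrow> nat \<Rightarrow> (nat \<Rightarrow> nat \<Rightarrow> real) \<Rightarrow> (nat \<Rightarrow> real) \<Rightarrow> (nat \<Rightarrow> real)
     \<Rightarrow> nat \<Rightarrow> (nat \<Rightarrow> real) \<Rightarrow> real" where
  "Lloc C K S \<alpha> \<beta> k x = qf (C k) (Jloc C K S \<alpha> \<beta> k) x - eloc C K S \<alpha> \<beta> k"

end

theory Submission
  imports Defs "Jordan_Normal_Form.Determinant"
begin


definition mm :: "nat set \<Rightarrow> (nat \<Rightarrow> nat \<Rightarrow> real) \<Rightarrow> (nat \<Rightarrow> nat \<Rightarrow> real) \<Rightarrow> nat \<Rightarrow> nat \<Rightarrow> real" where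
  "mm U A B i j = (\<Sum>k\<in>U. A i k * B k j)"

definition isinv :: "nat set \<Rightarrow> (nat \<Rightarrow> nat \<Rightarrow> real) \<Rightarrow> (nat \<Rightarrow> nat \<Rightarrow> real) \<Rightarrow> bool" where
  "isinv U M B \<longleftrightarrow> (\<forall>i\<in>U. \<forall>j\<in>U. mm U M B i j = idm i j) \<and> (\<forall>i j. (i \<notin> U \<or> j \<notin> U) \<longrightarrow> B i j = 0)"

lemma inv_on_def2: "inv_on U M = (SOME B. isinv U M B)"
  unfolding inv_on_def isinv_def mm_def ..

definition enum :: "nat set \<Rightarrow> nat \<Rightarrow> nat" where "enum U i = sorted_list_of_set U ! i"
definition uenum :: "nat set \<Rightarrow> nat \<Rightarrow> nat" where "uenum U = inv_into {0..<card U} (enum U)"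

lemma enum_bij: "finite U \<Longrightarrow> bij_betw (enum U) {0..<card U} U"
  unfolding enum_def by (rule bij_betw_nth) (auto simp: atLeast0LessThan)

lemma enum_in: "finite U \<Longrightarrow> i < card U \<Longrightarrow> enum U i \<in> U"
  using enum_bij[of U] by (auto dest: bij_betwE)

lemma uenum_lt: "finite U \<Longrightarrow> u \<in> U \<Longrightarrow> uenum U u < card U"
  using bij_betw_inv_into[OF enum_bij[of U]] unfolding uenum_def by (auto dest: bij_betwE)

lemma enum_uenum: "finite U \<Longrightarrow> u \<in> U \<Longrightarrow> enum U (uenum U u) = u"
  unfolding uenum_def using enum_bij[of U] by (simp add: bij_betw_inv_into_right)

lemma uenum_enum: "finite U \<Longrightarrow> i < card U \<Longrightarrow> uenum U (enum U i) = i"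
  unfolding uenum_def using enum_bij[of U] by (simp add: bij_betw_inv_into_left)

lemma enum_inj: "finite U \<Longrightarrow> i < card U \<Longrightarrow> j < card U \<Longrightarrow> enum U i = enum U j \<longleftrightarrow> i = j"
  by (metis uenum_enum)

definition tomat :: "nat set \<Rightarrow> (nat \<Rightarrow> nat \<Rightarrow> real) \<Rightarrow> real mat" where
  "tomat U A = mat (card U) (card U) (\<lambda>(i,j). A (enum U i) (enum U j))"

definition fromm :: "nat set \<Rightarrow> real mat \<Rightarrow> nat \<Rightarrow> nat \<Rightarrow> real" where
  "fromm U X i j = (if i \<in> U \<and> j \<in> U then X $$ (uenum U i, uenum U j) else 0)"

lemma tomat_carrier[simp]: "tomat U A \<in> carrier_mat (card U) (card U)"
  by (simp add: tomat_def)

lemma tomat_entry: "finite U \<Longrightarrow> i \<in> U \<Longrightarrow> j \<in> U \<Longrightarrow> tomat U A $$ (uenum U i, uenum U j) = A i j"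
  by (simp add: tomat_def uenum_lt enum_uenum)

lemma tomat_eq_iff: "finite U \<Longrightarrow> tomat U X = tomat U Y \<longleftrightarrow> (\<forall>i\<in>U. \<forall>j\<in>U. X i j = Y i j)"
proof
  assume "finite U" "tomat U X = tomat U Y"
  then show "\<forall>i\<in>U. \<forall>j\<in>U. X i j = Y i j" by (metis tomat_entry)
next
  assume "finite U" "\<forall>i\<in>U. \<forall>j\<in>U. X i j = Y i j"
  then show "tomat U X = tomat U Y"
    by (intro eq_matI) (auto simp: tomat_def enum_in)
qed

lemma tomat_fromm: "finite U \<Longrightarrow> X \<in> carrier_mat (card U) (card U) \<Longrightarrow> tomat U (fromm U X) = X"
  by (intro eq_matI) (auto simp: tomat_def fromm_def enum_in uenum_enum)

lemma tomat_idm: "finite U \<Longrightarrow> tomat U idm = 1\<^sub>m (card U)"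
  by (intro eq_matI) (auto simp: tomat_def idm_def enum_inj)

lemma tomat_mm: "finite U \<Longrightarrow> tomat U (mm U A B) = tomat U A * tomat U B"
proof (intro eq_matI)
  fix i j assume U: "finite U" and ij: "i < dim_row (tomat U A * tomat U B)" "j < dim_col (tomat U A * tomat U B)"
  have "(tomat U A * tomat U B) $$ (i,j) = (\<Sum>k\<in>{0..<card U}. A (enum U i) (enum U k) * B (enum U k) (enum U j))"
    using ij by (simp add: tomat_def scalar_prod_def)
  also have "\<dots> = (\<Sum>k\<in>U. A (enum U i) k * B k (enum U j))"
    by (rule sum.reindex_bij_betw[OF enum_bij[OF U], where g = "\<lambda>k. A (enum U i) k * B k (enum U j)"])
  finally show "tomat U (mm U A B) $$ (i, j) = (tomat U A * tomat U B) $$ (i, j)"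
    using ij by (simp add: tomat_def mm_def)
qed (auto simp: tomat_def)

lemma det_on_cong: "(\<And>i j. i \<in> U \<Longrightarrow> j \<in> U \<Longrightarrow> A i j = B i j) \<Longrightarrow> det_on U A = det_on U B"
  unfolding det_on_def
  by (intro sum.cong refl arg_cong2[where f="(*)"] prod.cong) (auto simp: permutes_in_image)

lemma det_on_tomat:
  assumes U: "finite U"
  shows "det_on U A = Determinant.det (tomat U A)"
proof -
  let ?n = "card U"
  let ?f = "enum U"
  have bf: "bij_betw ?f {0..<?n} U" by (rule enum_bij[OF U])
  let ?F = "\<lambda>\<pi> x. if x \<in> U then ?f (\<pi> (inv_into {0..<?n} ?f x)) else x"
  have bF: "bij_betw ?F {\<pi>. \<pi> permutes {0..<?n}} {\<pi>. \<pi> permutes U}"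
    by (rule bij_betw_permutations[OF bf])
  have "Determinant.det (tomat U A) = (\<Sum>q | q permutes {0..<?n}. of_int (sign q) * (\<Prod>i = 0..<?n. A (?f i) (?f (q i))))"
    unfolding det_def'[OF tomat_carrier]
    by (intro sum.cong refl arg_cong2[where f="(*)"] prod.cong) (auto simp: tomat_def permutes_in_image)
  also have "\<dots> = (\<Sum>q | q permutes {0..<?n}. of_int (sign (?F q)) * (\<Prod>i\<in>U. A i (?F q i)))"
  proof (intro sum.cong refl)
    fix q assume q: "q \<in> {q. q permutes {0..<?n}}"
    have fU: "?f ` {0..<?n} = U" using bf by (simp add: bij_betw_def)
    have "?F q = map_permutation {0..<?n} ?f q"
      unfolding map_permutation_def restrict_id_def fU by (auto simp: fun_eq_iff)
    then have s: "sign (?F q) = sign q"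
      using sign_map_permutation[of ?f "{0..<?n}" q] q bf by (simp add: bij_betw_def)
    have "(\<Prod>i\<in>U. A i (?F q i)) = (\<Prod>k\<in>{0..<?n}. A (?f k) (?F q (?f k)))"
      by (rule prod.reindex_bij_betw[OF bf, symmetric])
    also have "\<dots> = (\<Prod>k\<in>{0..<?n}. A (?f k) (?f (q k)))"
      using bf by (intro prod.cong refl) (auto simp: bij_betw_inv_into_left enum_in[OF U])
    finally show "of_int (sign q) * (\<Prod>i = 0..<?n. A (?f i) (?f (q i))) = of_int (sign (?F q)) * (\<Prod>i\<in>U. A i (?F q i))"
      using s by simp
  qed
  also have "\<dots> = det_on U A"
    unfolding det_on_def
    by (rule sum.reindex_bij_betw[OF bF, where g = "\<lambda>p. of_int (sign p) * (\<Prod>i\<in>U. A i (p i))"])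
  finally show ?thesis ..
qed


lemma det_on_subm: "det_on U (subm U M) = det_on U M"
  by (rule det_on_cong) (simp add: subm_def)

lemma isinv_subm: "isinv U (subm U M) = isinv U M"
  by (auto simp: fun_eq_iff isinv_def mm_def subm_def)

lemma inv_on_subm: "inv_on U (subm U M) = inv_on U M"
  unfolding inv_on_def2 isinv_subm ..

lemma pd_det_nz:
  assumes U: "finite U" and pd: "sym_pos_def_on U M"
  shows "Determinant.det (tomat U M) \<noteq> 0"
proof
  assume "Determinant.det (tomat U M) = 0"
  then obtain v where v: "v \<in> carrier_vec (card U)" "v \<noteq> 0\<^sub>v (card U)" "tomat U M *\<^sub>v v = 0\<^sub>v (card U)"
    using det_0_iff_vec_prod_zero[OF tomat_carrier] by blast
  obtain i where i: "i < card U" "v $ i \<noteq> 0"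
  proof (rule ccontr)
    assume "\<not> thesis"
    then have "\<forall>i < card U. v $ i = 0" using that by blast
    then have "v = 0\<^sub>v (card U)" using v(1) by (intro eq_vecI) auto
    then show False using v(2) by simp
  qed
  define x where "x = (\<lambda>u. if u \<in> U then v $ uenum U u else 0)"
  have xi: "\<exists>u\<in>U. x u \<noteq> 0"
    using i by (intro bexI[of _ "enum U i"]) (auto simp: x_def enum_in[OF U] uenum_enum[OF U])
  have row0: "(\<Sum>w\<in>U. M u w * x w) = 0" if u: "u \<in> U" for u
  proof -
    have "(\<Sum>w\<in>U. M u w * x w) = (\<Sum>k\<in>{0..<card U}. M u (enum U k) * x (enum U k))"
      by (rule sum.reindex_bij_betw[OF enum_bij[OF U], symmetric])
    also have "\<dots> = (tomat U M *\<^sub>v v) $ uenum U u"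
      using v(1) u U by (auto simp: tomat_def scalar_prod_def x_def enum_in uenum_enum uenum_lt enum_uenum intro!: sum.cong)
    also have "\<dots> = 0" using v(3) uenum_lt[OF U u] by simp
    finally show ?thesis .
  qed
  have "qf U M x = (\<Sum>u\<in>U. x u * (\<Sum>w\<in>U. M u w * x w))"
    unfolding qf_def by (simp add: sum_distrib_left mult.assoc)
  also have "\<dots> = 0" using row0 by simp
  finally show False using pd xi unfolding sym_pos_def_on_def by auto
qed

lemma inv_exists:
  assumes U: "finite U" and pd: "sym_pos_def_on U M"
  shows "\<exists>B. isinv U M B"
proof -
  from det_non_zero_imp_unit[OF tomat_carrier pd_det_nz[OF U pd], of undefined]
  obtain Y where Y: "Y \<in> carrier_mat (card U) (card U)" "tomat U M * Y = 1\<^sub>m (card U)"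
    unfolding Units_def by (auto simp: ring_mat_simps)
  define B where "B = fromm U Y"
  have "isinv U M B" unfolding isinv_def
  proof
    have "tomat U (mm U M B) = tomat U idm"
      using tomat_mm[OF U] tomat_fromm[OF U Y(1)] Y(2) tomat_idm[OF U] B_def by simp
    then show "\<forall>i\<in>U. \<forall>j\<in>U. mm U M B i j = idm i j"
      using tomat_eq_iff[OF U] by blast
    show "\<forall>i j. (i \<notin> U \<or> j \<notin> U) \<longrightarrow> B i j = 0" by (auto simp: B_def fromm_def)
  qed
  then show ?thesis by blast
qed

lemma isinv_mat: "finite U \<Longrightarrow> isinv U M B \<Longrightarrow> tomat U M * tomat U B = 1\<^sub>m (card U)"
  using tomat_eq_iff[of U "mm U M B" idm] by (simp add: isinv_def tomat_mm tomat_idm)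

lemma isinv_left: "finite U \<Longrightarrow> isinv U M B \<Longrightarrow> i \<in> U \<Longrightarrow> j \<in> U \<Longrightarrow> mm U B M i j = idm i j"
proof -
  assume U: "finite U" and B: "isinv U M B" and ij: "i \<in> U" "j \<in> U"
  have "tomat U B * tomat U M = 1\<^sub>m (card U)"
    by (rule mat_mult_left_right_inverse[OF tomat_carrier tomat_carrier isinv_mat[OF U B]])
  then have "tomat U (mm U B M) = tomat U idm" by (simp add: tomat_mm[OF U] tomat_idm[OF U])
  then show ?thesis using tomat_eq_iff[OF U] ij by blast
qed

lemma isinv_unique:
  assumes U: "finite U" and B1: "isinv U M B1" and B2: "isinv U M B2"
  shows "B1 = B2"
proof -
  have 1: "tomat U M * tomat U B2 = 1\<^sub>m (card U)" by (rule isinv_mat[OF U B2])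
  have 2: "tomat U B1 * tomat U M = 1\<^sub>m (card U)"
    by (rule mat_mult_left_right_inverse[OF tomat_carrier tomat_carrier isinv_mat[OF U B1]])
  have "tomat U B1 = tomat U B1 * (tomat U M * tomat U B2)" by (metis 1 right_mult_one_mat tomat_carrier)
  also have "\<dots> = (tomat U B1 * tomat U M) * tomat U B2"
    by (rule assoc_mult_mat[symmetric, OF tomat_carrier tomat_carrier tomat_carrier])
  also have "\<dots> = tomat U B2" by (metis 2 left_mult_one_mat tomat_carrier)
  finally have "\<forall>i\<in>U. \<forall>j\<in>U. B1 i j = B2 i j" using tomat_eq_iff[OF U] by blast
  then show ?thesis using B1 B2 unfolding isinv_def by (metis ext)
qed

lemma inv_on_isinv: "finite U \<Longrightarrow> sym_pos_def_on U M \<Longrightarrow> isinv U M (inv_on U M)"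
  unfolding inv_on_def2 by (rule someI_ex[OF inv_exists])

lemma inv_on_eqI: "finite U \<Longrightarrow> sym_pos_def_on U M \<Longrightarrow> isinv U M B \<Longrightarrow> inv_on U M = B"
  using isinv_unique inv_on_isinv by blast

lemma inv_on_zero: "finite U \<Longrightarrow> sym_pos_def_on U M \<Longrightarrow> i \<notin> U \<or> j \<notin> U \<Longrightarrow> inv_on U M i j = 0"
  using inv_on_isinv unfolding isinv_def by blast

lemma inv_on_right: "finite U \<Longrightarrow> sym_pos_def_on U M \<Longrightarrow> i \<in> U \<Longrightarrow> j \<in> U \<Longrightarrow> (\<Sum>k\<in>U. M i k * inv_on U M k j) = idm i j"
  using inv_on_isinv unfolding isinv_def mm_def by blast

lemma inv_on_left: "finite U \<Longrightarrow> sym_pos_def_on U M \<Longrightarrow> i \<in> U \<Longrightarrow> j \<in> U \<Longrightarrow> (\<Sum>k\<in>U. inv_on U M i k * M k j) = idm i j"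
  using isinv_left[OF _ inv_on_isinv] unfolding mm_def by blast

lemma inv_sym:
  assumes U: "finite U" and pd: "sym_pos_def_on U M"
  shows "inv_on U M i j = inv_on U M j i"
proof -
  let ?B = "inv_on U M"
  have "isinv U M (\<lambda>i j. ?B j i)" unfolding isinv_def
  proof (intro conjI ballI allI impI)
    fix i j assume ij: "i \<in> U" "j \<in> U"
    have "mm U M (\<lambda>i j. ?B j i) i j = (\<Sum>k\<in>U. ?B j k * M k i)"
      unfolding mm_def using pd ij unfolding sym_pos_def_on_def by (intro sum.cong) auto
    also have "\<dots> = idm j i" by (rule inv_on_left[OF U pd ij(2) ij(1)])
    finally show "mm U M (\<lambda>i j. ?B j i) i j = idm i j" by (simp add: idm_def)
  next
    fix i j :: nat assume "i \<notin> U \<or> j \<notin> U"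
    then show "?B j i = 0" using inv_on_zero[OF U pd] by blast
  qed
  then have "?B = (\<lambda>i j. ?B j i)" by (rule inv_on_eqI[OF U pd])
  then show ?thesis by metis
qed

lemma sum_idm_left: "finite R \<Longrightarrow> k \<in> R \<Longrightarrow> (\<Sum>r\<in>R. idm k r * f r) = f k"
proof -
  assume "finite R" "k \<in> R"
  have "(\<Sum>r\<in>R. idm k r * f r) = (\<Sum>r\<in>R. if k = r then f r else 0)" by (rule sum.cong) (auto simp: idm_def)
  then show ?thesis using \<open>finite R\<close> \<open>k \<in> R\<close> by simp
qed

lemma sum_idm_right: "finite R \<Longrightarrow> k \<in> R \<Longrightarrow> (\<Sum>r\<in>R. f r * idm r k) = f k"
proof -
  assume "finite R" "k \<in> R"
  have "(\<Sum>r\<in>R. f r * idm r k) = (\<Sum>r\<in>R. if k = r then f r else 0)" by (rule sum.cong) (auto simp: idm_def)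
  then show ?thesis using \<open>finite R\<close> \<open>k \<in> R\<close> by simp
qed

lemma sum2_sub:
  assumes V: "finite V" and UV: "U \<subseteq> V"
    and z: "\<And>i j. i \<in> V \<Longrightarrow> j \<in> V \<Longrightarrow> i \<notin> U \<or> j \<notin> U \<Longrightarrow> f i j = 0"
  shows "(\<Sum>i\<in>V. \<Sum>j\<in>V. f i j) = (\<Sum>i\<in>U. \<Sum>j\<in>U. f i j)"
proof -
  have "(\<Sum>i\<in>V. \<Sum>j\<in>V. f i j) = (\<Sum>i\<in>V. \<Sum>j\<in>U. f i j)"
    by (intro sum.cong refl sum.mono_neutral_right[OF V UV]) (use z in auto)
  also have "\<dots> = (\<Sum>i\<in>U. \<Sum>j\<in>U. f i j)"
    by (intro sum.mono_neutral_right[OF V UV]) (use UV in \<open>auto intro!: sum.neutral z\<close>)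
  finally show ?thesis .
qed

lemma pd_subset:
  assumes V: "finite V" and pd: "sym_pos_def_on V M" and UV: "U \<subseteq> V"
  shows "sym_pos_def_on U M"
  unfolding sym_pos_def_on_def
proof (intro conjI allI impI ballI)
  fix i j assume "i \<in> U" "j \<in> U" then show "M i j = M j i" using pd UV unfolding sym_pos_def_on_def by blast
next
  fix x :: "nat \<Rightarrow> real" assume x: "\<exists>i\<in>U. x i \<noteq> 0"
  define x' where "x' = (\<lambda>i. if i \<in> U then x i else 0)"
  have "qf V M x' = qf U M x'"
    unfolding qf_def by (rule sum2_sub[OF V UV]) (auto simp: x'_def)
  also have "\<dots> = qf U M x" unfolding qf_def x'_def by simp
  finally have e: "qf V M x' = qf U M x" .
  have "\<exists>i\<in>V. x' i \<noteq> 0" using x UV by (auto simp: x'_def)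
  then have "qf V M x' > 0" using pd unfolding sym_pos_def_on_def by blast
  then show "qf U M x > 0" using e by simp
qed

lemma inv_pd:
  assumes U: "finite U" and pd: "sym_pos_def_on U M"
  shows "sym_pos_def_on U (inv_on U M)"
  unfolding sym_pos_def_on_def
proof (intro conjI allI impI ballI)
  fix i j show "inv_on U M i j = inv_on U M j i" by (rule inv_sym[OF U pd])
next
  let ?B = "inv_on U M"
  fix x :: "nat \<Rightarrow> real" assume x: "\<exists>i\<in>U. x i \<noteq> 0"
  define y where "y = (\<lambda>i. \<Sum>j\<in>U. ?B i j * x j)"
  have c1: "(\<Sum>j\<in>U. M i j * y j) = x i" if i: "i \<in> U" for i
  proof -
    have "(\<Sum>j\<in>U. M i j * y j) = (\<Sum>j\<in>U. \<Sum>k\<in>U. M i j * ?B j k * x k)"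
      unfolding y_def by (simp add: sum_distrib_left mult.assoc)
    also have "\<dots> = (\<Sum>k\<in>U. (\<Sum>j\<in>U. M i j * ?B j k) * x k)"
      by (subst sum.swap) (simp add: sum_distrib_right)
    also have "\<dots> = (\<Sum>k\<in>U. idm i k * x k)"
      using inv_on_right[OF U pd i] by simp
    also have "\<dots> = x i" by (rule sum_idm_left[OF U i])
    finally show ?thesis .
  qed
  have yi: "\<exists>i\<in>U. y i \<noteq> 0"
  proof (rule ccontr)
    assume "\<not> ?thesis"
    then have "\<forall>i\<in>U. x i = 0" using c1 by (metis (no_types, lifting) mult_zero_right sum.neutral)
    then show False using x by blast
  qed
  have "qf U M y = (\<Sum>i\<in>U. y i * (\<Sum>j\<in>U. M i j * y j))"
    unfolding qf_def by (simp add: sum_distrib_left mult.assoc)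
  also have "\<dots> = (\<Sum>i\<in>U. y i * x i)" using c1 by simp
  also have "\<dots> = qf U ?B x"
    unfolding qf_def y_def by (simp add: sum_distrib_right sum_distrib_left mult_ac)
  finally have "qf U ?B x = qf U M y" by simp
  moreover have "qf U M y > 0" using pd yi unfolding sym_pos_def_on_def by blast
  ultimately show "qf U ?B x > 0" by simp
qed




lemma split_sum_UR: "finite U \<Longrightarrow> finite R \<Longrightarrow> U \<inter> R = {} \<Longrightarrow> (\<Sum>k\<in>U \<union> R. f k) = (\<Sum>k\<in>U. f k) + (\<Sum>k\<in>R. f k)"
  by (rule sum.union_disjoint)

lemma swap3: "(\<Sum>a\<in>A. \<Sum>b\<in>B. \<Sum>c\<in>C. f a b c) = (\<Sum>b\<in>B. \<Sum>c\<in>C. \<Sum>a\<in>A. f a b c)"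
  by (subst sum.swap, rule sum.cong[OF refl], rule sum.swap)

lemma schur:
  assumes V: "finite V" and pd: "sym_pos_def_on V M" and UR: "V = U \<union> R" "U \<inter> R = {}"
  shows "inv_on U M = (\<lambda>i j. if i \<in> U \<and> j \<in> U then inv_on V M i j
           - (\<Sum>r\<in>R. \<Sum>s\<in>R. inv_on V M i r * inv_on R (inv_on V M) r s * inv_on V M s j) else 0)"
proof -
  define P where "P = inv_on V M"
  define Q where "Q = inv_on R P"
  have fU: "finite U" and fR: "finite R" using V UR by auto
  have pdU: "sym_pos_def_on U M" by (rule pd_subset[OF V pd]) (use UR in auto)
  have pdP: "sym_pos_def_on V P" unfolding P_def by (rule inv_pd[OF V pd])
  have pdPR: "sym_pos_def_on R P" by (rule pd_subset[OF V pdP]) (use UR in auto)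
  have F2: "(\<Sum>r\<in>R. P k r * Q r s) = idm k s" if "k \<in> R" "s \<in> R" for k s
    unfolding Q_def by (rule inv_on_right[OF fR pdPR that])
  have main: "(\<Sum>k\<in>U. M i k * (P k j - (\<Sum>r\<in>R. \<Sum>s\<in>R. P k r * Q r s * P s j))) = idm i j"
    if i: "i \<in> U" and j: "j \<in> U" for i j
  proof -
    have F1: "(\<Sum>k\<in>U. M i k * P k a) = idm i a - (\<Sum>k\<in>R. M i k * P k a)" if a: "a \<in> V" for a
    proof -
      have "(\<Sum>k\<in>V. M i k * P k a) = idm i a"
        unfolding P_def by (rule inv_on_right[OF V pd _ a]) (use i UR in auto)
      then show ?thesis using split_sum_UR[OF fU fR UR(2), of "\<lambda>k. M i k * P k a"] UR(1) by simp
    qed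
    have F1': "(\<Sum>k\<in>U. M i k * P k r) = - (\<Sum>k\<in>R. M i k * P k r)" if r: "r \<in> R" for r
    proof -
      have "idm i r = 0" using i r UR(2) by (auto simp: idm_def)
      then show ?thesis using F1[of r] r UR(1) by simp
    qed
    have T2: "(\<Sum>k\<in>U. \<Sum>r\<in>R. \<Sum>s\<in>R. M i k * P k r * Q r s * P s j) = - (\<Sum>k\<in>R. M i k * P k j)"
    proof -
      have "(\<Sum>k\<in>U. \<Sum>r\<in>R. \<Sum>s\<in>R. M i k * P k r * Q r s * P s j)
          = (\<Sum>r\<in>R. \<Sum>s\<in>R. \<Sum>k\<in>U. M i k * P k r * Q r s * P s j)" by (rule swap3)
      also have "\<dots> = (\<Sum>r\<in>R. \<Sum>s\<in>R. (\<Sum>k\<in>U. M i k * P k r) * Q r s * P s j)"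
        by (simp add: sum_distrib_right)
      also have "\<dots> = (\<Sum>r\<in>R. \<Sum>s\<in>R. - ((\<Sum>k\<in>R. M i k * P k r) * Q r s * P s j))"
        using F1' by simp
      also have "\<dots> = - (\<Sum>r\<in>R. \<Sum>s\<in>R. \<Sum>k\<in>R. M i k * P k r * Q r s * P s j)"
        by (simp add: sum_distrib_right sum_negf)
      also have "(\<Sum>r\<in>R. \<Sum>s\<in>R. \<Sum>k\<in>R. M i k * P k r * Q r s * P s j)
          = (\<Sum>k\<in>R. \<Sum>s\<in>R. \<Sum>r\<in>R. M i k * P k r * Q r s * P s j)"
        by (subst sum.swap, subst sum.swap, rule sum.cong[OF refl], rule sum.swap)
      also have "\<dots> = (\<Sum>k\<in>R. \<Sum>s\<in>R. M i k * (\<Sum>r\<in>R. P k r * Q r s) * P s j)"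
        by (simp add: sum_distrib_left sum_distrib_right mult.assoc)
      also have "\<dots> = (\<Sum>k\<in>R. \<Sum>s\<in>R. M i k * (idm k s * P s j))"
        using F2 by (simp add: mult.assoc)
      also have "\<dots> = (\<Sum>k\<in>R. M i k * P k j)"
        by (intro sum.cong refl) (simp add: sum_distrib_left[symmetric] sum_idm_left[OF fR])
      finally show ?thesis .
    qed
    have "(\<Sum>k\<in>U. M i k * (P k j - (\<Sum>r\<in>R. \<Sum>s\<in>R. P k r * Q r s * P s j)))
        = (\<Sum>k\<in>U. M i k * P k j) - (\<Sum>k\<in>U. \<Sum>r\<in>R. \<Sum>s\<in>R. M i k * P k r * Q r s * P s j)"
      by (simp add: right_diff_distrib sum_subtractf sum_distrib_left mult.assoc)
    also have "\<dots> = idm i j" using T2 F1[of j] j UR(1) by simp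
    finally show ?thesis .
  qed
  have "inv_on U M = (\<lambda>i j. if i \<in> U \<and> j \<in> U then P i j - (\<Sum>r\<in>R. \<Sum>s\<in>R. P i r * Q r s * P s j) else 0)"
  proof (rule inv_on_eqI[OF fU pdU], unfold isinv_def mm_def, intro conjI ballI allI impI)
    fix i j assume ij: "i \<in> U" "j \<in> U"
    have "(\<Sum>k\<in>U. M i k * (if k \<in> U \<and> j \<in> U then P k j - (\<Sum>r\<in>R. \<Sum>s\<in>R. P k r * Q r s * P s j) else 0))
       = (\<Sum>k\<in>U. M i k * (P k j - (\<Sum>r\<in>R. \<Sum>s\<in>R. P k r * Q r s * P s j)))"
      using ij by (intro sum.cong) auto
    then show "(\<Sum>k\<in>U. M i k * (if k \<in> U \<and> j \<in> U then P k j - (\<Sum>r\<in>R. \<Sum>s\<in>R. P k r * Q r s * P s j) else 0)) = idm i j"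
      using main[OF ij] by simp
  qed auto
  then show ?thesis unfolding P_def Q_def .
qed

lemma blockdiag_inv:
  assumes R: "finite R" and pd: "sym_pos_def_on R P" and AB: "R = A \<union> B" "A \<inter> B = {}"
    and z: "\<And>a b. a \<in> A \<Longrightarrow> b \<in> B \<Longrightarrow> P a b = 0"
  shows "inv_on R P = (\<lambda>i j. inv_on A P i j + inv_on B P i j)"
proof -
  have fA: "finite A" and fB: "finite B" using R AB by auto
  have pdA: "sym_pos_def_on A P" by (rule pd_subset[OF R pd]) (use AB in auto)
  have pdB: "sym_pos_def_on B P" by (rule pd_subset[OF R pd]) (use AB in auto)
  have z': "P b a = 0" if "a \<in> A" "b \<in> B" for a b
    using z[OF that] pd that AB unfolding sym_pos_def_on_def by auto
  let ?QA = "inv_on A P" and ?QB = "inv_on B P"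
  have zA: "?QA i j = 0" if "i \<notin> A \<or> j \<notin> A" for i j using inv_on_zero[OF fA pdA that] .
  have zB: "?QB i j = 0" if "i \<notin> B \<or> j \<notin> B" for i j using inv_on_zero[OF fB pdB that] .
  show ?thesis
  proof (rule inv_on_eqI[OF R pd], unfold isinv_def mm_def, intro conjI ballI allI impI)
    fix i j assume i: "i \<in> R" and j: "j \<in> R"
    have s: "(\<Sum>k\<in>R. P i k * (?QA k j + ?QB k j)) = (\<Sum>k\<in>A. P i k * ?QA k j) + (\<Sum>k\<in>B. P i k * ?QB k j)"
    proof -
      have "(\<Sum>k\<in>R. P i k * (?QA k j + ?QB k j)) = (\<Sum>k\<in>A. P i k * (?QA k j + ?QB k j)) + (\<Sum>k\<in>B. P i k * (?QA k j + ?QB k j))"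
        unfolding AB(1) by (rule sum.union_disjoint[OF fA fB AB(2)])
      also have "(\<Sum>k\<in>A. P i k * (?QA k j + ?QB k j)) = (\<Sum>k\<in>A. P i k * ?QA k j)"
      proof (intro sum.cong refl)
        fix k assume "k \<in> A" then have "k \<notin> B" using AB(2) by auto
        then show "P i k * (?QA k j + ?QB k j) = P i k * ?QA k j" by (simp add: zB)
      qed
      also have "(\<Sum>k\<in>B. P i k * (?QA k j + ?QB k j)) = (\<Sum>k\<in>B. P i k * ?QB k j)"
      proof (intro sum.cong refl)
        fix k assume "k \<in> B" then have "k \<notin> A" using AB(2) by auto
        then show "P i k * (?QA k j + ?QB k j) = P i k * ?QB k j" by (simp add: zA)
      qed
      finally show ?thesis .
    qed
    show "(\<Sum>k\<in>R. P i k * (?QA k j + ?QB k j)) = idm i j"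
      unfolding s
    proof (cases "i \<in> A"; cases "j \<in> A")
      assume "i \<in> A" "j \<in> A"
      moreover then have "j \<notin> B" using AB(2) by auto
      ultimately show "(\<Sum>k\<in>A. P i k * ?QA k j) + (\<Sum>k\<in>B. P i k * ?QB k j) = idm i j"
        using inv_on_right[OF fA pdA] by (simp add: zB)
    next
      assume "i \<in> A" "j \<notin> A"
      then have "j \<in> B" "i \<noteq> j" using j AB by auto
      then show "(\<Sum>k\<in>A. P i k * ?QA k j) + (\<Sum>k\<in>B. P i k * ?QB k j) = idm i j"
        using \<open>i \<in> A\<close> \<open>j \<notin> A\<close> by (auto simp: zA z idm_def)
    next
      assume "i \<notin> A" "j \<in> A"
      then have "i \<in> B" "i \<noteq> j" "j \<notin> B" using i AB by auto
      then show "(\<Sum>k\<in>A. P i k * ?QA k j) + (\<Sum>k\<in>B. P i k * ?QB k j) = idm i j"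
        using \<open>j \<in> A\<close> by (simp add: zB z' idm_def)
    next
      assume "i \<notin> A" "j \<notin> A"
      moreover have "i \<in> B" "j \<in> B" using i j AB \<open>i \<notin> A\<close> \<open>j \<notin> A\<close> by auto
      ultimately show "(\<Sum>k\<in>A. P i k * ?QA k j) + (\<Sum>k\<in>B. P i k * ?QB k j) = idm i j"
        using inv_on_right[OF fB pdB] by (simp add: zA)
    qed
  next
    fix i j assume "i \<notin> R \<or> j \<notin> R"
    then show "?QA i j + ?QB i j = 0" using AB by (auto simp: zA zB)
  qed
qed

lemma det_unitcol:
  assumes V: "finite V" and RV: "R \<subseteq> V" and L: "\<And>i j. i \<in> V \<Longrightarrow> j \<in> R \<Longrightarrow> L i j = idm i j"
  shows "det_on V L = det_on (V - R) L"
proof -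
  have sub: "{p. p permutes (V - R)} \<subseteq> {p. p permutes V}" by (auto intro: permutes_subset)
  have "det_on V L = (\<Sum>p\<in>{p. p permutes (V - R)}. of_int (sign p) * (\<Prod>i\<in>V. L i (p i)))"
    unfolding det_on_def
  proof (rule sum.mono_neutral_right[OF finite_permutations[OF V] sub], rule ballI)
    fix p assume p: "p \<in> {p. p permutes V} - {p. p permutes (V - R)}"
    then have pV: "p permutes V" by simp
    have "\<exists>r\<in>R. p r \<noteq> r"
    proof (rule ccontr)
      assume "\<not> ?thesis"
      then have "\<forall>x. x \<notin> V - R \<longrightarrow> p x = x" using permutes_not_in[OF pV] by blast
      then have "p permutes (V - R)" using pV unfolding permutes_def by blast
      then show False using p by simp
    qed
    then obtain r where r: "r \<in> R" "p r \<noteq> r" by blast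
    define i where "i = inv_into UNIV p r"
    have pi: "p i = r" unfolding i_def by (rule permutes_inverses(1)[OF pV])
    have iV: "i \<in> V" unfolding i_def using permutes_in_image[OF permutes_inv[OF pV]] r RV by auto
    have "i \<noteq> r" using pi r by auto
    then have "L i (p i) = 0" using L[OF iV r(1)] pi by (simp add: idm_def)
    then have "(\<Prod>i\<in>V. L i (p i)) = 0" using iV V by (intro prod_zero) auto
    then show "of_int (sign p) * (\<Prod>i\<in>V. L i (p i)) = 0" by simp
  qed
  also have "\<dots> = det_on (V - R) L"
    unfolding det_on_def
  proof (intro sum.cong refl arg_cong2[where f="(*)"])
    fix p assume "p \<in> {p. p permutes (V - R)}"
    then have p: "p permutes (V - R)" by simp
    show "(\<Prod>i\<in>V. L i (p i)) = (\<Prod>i\<in>V - R. L i (p i))"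
      by (rule prod.mono_neutral_right[OF V]) (use permutes_not_in[OF p] L RV in \<open>auto simp: idm_def\<close>)
  qed
  finally show ?thesis .
qed

lemma det_on_mm: "finite V \<Longrightarrow> det_on V (mm V A B) = det_on V A * det_on V B"
  by (simp add: det_on_tomat tomat_mm det_mult[OF tomat_carrier tomat_carrier])

lemma jacobi:
  assumes V: "finite V" and pd: "sym_pos_def_on V M" and RV: "R \<subseteq> V"
  shows "det_on V M * det_on R (inv_on V M) = det_on (V - R) M"
proof -
  define P where "P = inv_on V M"
  define U where "U = V - R"
  define N where "N = (\<lambda>i j. if j \<in> U then idm i j else P i j)"
  have UV: "U \<subseteq> V" unfolding U_def by auto
  have VU: "V - U = R" unfolding U_def using RV by auto
  have dN: "det_on V N = det_on R P"
  proof -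
    have "det_on V N = det_on (V - U) N" by (rule det_unitcol[OF V UV]) (simp add: N_def)
    also have "\<dots> = det_on R P" unfolding VU by (rule det_on_cong) (auto simp: N_def U_def)
    finally show ?thesis .
  qed
  have dL: "det_on V (mm V M N) = det_on U M"
  proof -
    have "det_on V (mm V M N) = det_on (V - R) (mm V M N)"
    proof (rule det_unitcol[OF V RV])
      fix i j assume "i \<in> V" "j \<in> R"
      then show "mm V M N i j = idm i j"
        unfolding mm_def N_def P_def U_def using inv_on_right[OF V pd] RV by auto
    qed
    also have "\<dots> = det_on U M"
      unfolding U_def[symmetric]
    proof (rule det_on_cong)
      fix i j assume "i \<in> U" "j \<in> U"
      then show "mm V M N i j = M i j"
        unfolding mm_def N_def using UV sum_idm_right[OF V, of j "M i"] by auto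
    qed
    finally show ?thesis .
  qed
  show ?thesis using det_on_mm[OF V, of M N] dN dL unfolding P_def U_def by simp
qed

lemma det_on_empty: "det_on {} A = 1"
  by (simp add: det_on_def)

lemma det_on_sing: "det_on {r} A = A r r"
  by (simp add: det_on_def)

lemma det_pos: "finite V \<Longrightarrow> sym_pos_def_on V M \<Longrightarrow> det_on V M > 0"
proof (induction "card V" arbitrary: V)
  case 0
  then have "V = {}" by simp
  then show ?case by (simp add: det_on_empty)
next
  case (Suc n)
  have "V \<noteq> {}" using Suc.hyps(2) by auto
  then obtain r where r: "r \<in> V" by blast
  have IH: "det_on (V - {r}) M > 0"
    using Suc r by (intro Suc.hyps(1)) (auto intro: pd_subset)
  have j: "det_on V M * det_on {r} (inv_on V M) = det_on (V - {r}) M"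
    by (rule jacobi[OF Suc.prems]) (use r in auto)
  have pdP: "sym_pos_def_on V (inv_on V M)" by (rule inv_pd[OF Suc.prems])
  define x where "x = (\<lambda>i::nat. if i = r then (1::real) else 0)"
  have "qf V (inv_on V M) x > 0" using pdP r unfolding sym_pos_def_on_def by (auto simp: x_def)
  moreover have "qf V (inv_on V M) x = inv_on V M r r"
    unfolding qf_def by (subst sum2_sub[OF Suc.prems(1), of "{r}"]) (use r in \<open>auto simp: x_def\<close>)
  ultimately have "det_on {r} (inv_on V M) > 0" by (simp add: det_on_sing)
  then show ?case using j IH by (metis zero_less_mult_iff not_less_iff_gr_or_eq)
qed




lemma glue:
  assumes W: "finite W" and pd: "sym_pos_def_on W M" and WUC: "W = U \<union> C" and S: "S = U \<inter> C"
    and z: "\<And>a b. a \<in> U - S \<Longrightarrow> b \<in> C - S \<Longrightarrow> inv_on W M a b = 0"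
  shows "inv_on W M i j = inv_on U M i j + inv_on C M i j - inv_on S M i j"
    and "det_on W M * det_on S M = det_on U M * det_on C M"
proof -
  define P where "P = inv_on W M"
  define A where "A = U - S"
  define B where "B = C - S"
  have fA: "finite A" and fB: "finite B" and fS: "finite S" and fU: "finite U" and fC: "finite C"
    using W WUC S by (auto simp: A_def B_def)
  have pdP: "sym_pos_def_on W P" unfolding P_def by (rule inv_pd[OF W pd])
  have Psym: "P a b = P b a" for a b
    unfolding P_def by (rule inv_sym[OF W pd])
  have Pz: "P i j = 0" if "i \<notin> W \<or> j \<notin> W" for i j
    unfolding P_def using inv_on_zero[OF W pd that] .
  have zAB: "P a b = 0" if "a \<in> A" "b \<in> B" for a b using z that unfolding A_def B_def P_def by blast
  have zBA: "P b a = 0" if "a \<in> A" "b \<in> B" for a b using zAB[OF that] Psym by simp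
  define QA where "QA = inv_on A P"
  define QB where "QB = inv_on B P"
  define XA where "XA = (\<lambda>i j. \<Sum>r\<in>A. \<Sum>s\<in>A. P i r * QA r s * P s j)"
  define XB where "XB = (\<lambda>i j. \<Sum>r\<in>B. \<Sum>s\<in>B. P i r * QB r s * P s j)"
  have pdPA: "sym_pos_def_on A P" by (rule pd_subset[OF W pdP]) (use WUC S in \<open>auto simp: A_def\<close>)
  have pdPB: "sym_pos_def_on B P" by (rule pd_subset[OF W pdP]) (use WUC S in \<open>auto simp: B_def\<close>)
  have pdPAB: "sym_pos_def_on (A \<union> B) P" by (rule pd_subset[OF W pdP]) (use WUC S in \<open>auto simp: A_def B_def\<close>)
  have XBz: "XB i j = 0" if "i \<in> A \<or> j \<in> A" for i j
    unfolding XB_def using that by (auto simp: zAB zBA intro!: sum.neutral)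
  have XAz: "XA i j = 0" if "i \<in> B \<or> j \<in> B" for i j
    unfolding XA_def using that by (auto simp: zAB zBA intro!: sum.neutral)
  have invU: "inv_on U M = (\<lambda>i j. if i \<in> U \<and> j \<in> U then P i j - XB i j else 0)"
    unfolding P_def XB_def QB_def
    by (rule schur[OF W pd]) (use WUC S in \<open>auto simp: B_def\<close>)
  have invC: "inv_on C M = (\<lambda>i j. if i \<in> C \<and> j \<in> C then P i j - XA i j else 0)"
    unfolding P_def XA_def QA_def
    by (rule schur[OF W pd]) (use WUC S in \<open>auto simp: A_def\<close>)
  have QAB: "inv_on (A \<union> B) P = (\<lambda>i j. QA i j + QB i j)"
    unfolding QA_def QB_def
    by (rule blockdiag_inv[OF _ pdPAB]) (use fA fB zAB S in \<open>auto simp: A_def B_def\<close>)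
  have invS0: "inv_on S M = (\<lambda>i j. if i \<in> S \<and> j \<in> S then P i j
           - (\<Sum>r\<in>A \<union> B. \<Sum>s\<in>A \<union> B. P i r * inv_on (A \<union> B) P r s * P s j) else 0)"
    unfolding P_def
    by (rule schur[OF W pd]) (use WUC S in \<open>auto simp: A_def B_def\<close>)
  have QAz: "QA i j = 0" if "i \<notin> A \<or> j \<notin> A" for i j unfolding QA_def by (rule inv_on_zero[OF fA pdPA that])
  have QBz: "QB i j = 0" if "i \<notin> B \<or> j \<notin> B" for i j unfolding QB_def by (rule inv_on_zero[OF fB pdPB that])
  have sumAB: "(\<Sum>r\<in>A \<union> B. \<Sum>s\<in>A \<union> B. P i r * inv_on (A \<union> B) P r s * P s j) = XA i j + XB i j" for i j
  proof -
    have "(\<Sum>r\<in>A \<union> B. \<Sum>s\<in>A \<union> B. P i r * inv_on (A \<union> B) P r s * P s j)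
        = (\<Sum>r\<in>A \<union> B. \<Sum>s\<in>A \<union> B. P i r * QA r s * P s j) + (\<Sum>r\<in>A \<union> B. \<Sum>s\<in>A \<union> B. P i r * QB r s * P s j)"
      unfolding QAB by (simp add: distrib_left distrib_right sum.distrib)
    also have "(\<Sum>r\<in>A \<union> B. \<Sum>s\<in>A \<union> B. P i r * QA r s * P s j) = XA i j"
      unfolding XA_def by (rule sum2_sub) (use fA fB QAz in auto)
    also have "(\<Sum>r\<in>A \<union> B. \<Sum>s\<in>A \<union> B. P i r * QB r s * P s j) = XB i j"
      unfolding XB_def by (rule sum2_sub) (use fA fB QBz in auto)
    finally show ?thesis .
  qed
  have invS: "inv_on S M = (\<lambda>i j. if i \<in> S \<and> j \<in> S then P i j - (XA i j + XB i j) else 0)"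
    unfolding invS0 sumAB ..
  have part: "W = A \<union> S \<union> B" "U = A \<union> S" "C = S \<union> B" "A \<inter> S = {}" "B \<inter> S = {}" "A \<inter> B = {}"
    using WUC S by (auto simp: A_def B_def)
  show "inv_on W M i j = inv_on U M i j + inv_on C M i j - inv_on S M i j"
    unfolding invU invC invS P_def[symmetric]
  proof (cases "i \<in> W \<and> j \<in> W")
    case False
    then show "P i j = (if i \<in> U \<and> j \<in> U then P i j - XB i j else 0) + (if i \<in> C \<and> j \<in> C then P i j - XA i j else 0)
      - (if i \<in> S \<and> j \<in> S then P i j - (XA i j + XB i j) else 0)"
      using part Pz by auto
  next
    case True
    then have iW: "i \<in> A \<or> i \<in> S \<or> i \<in> B" and jW: "j \<in> A \<or> j \<in> S \<or> j \<in> B" using part by auto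
    show "P i j = (if i \<in> U \<and> j \<in> U then P i j - XB i j else 0) + (if i \<in> C \<and> j \<in> C then P i j - XA i j else 0)
      - (if i \<in> S \<and> j \<in> S then P i j - (XA i j + XB i j) else 0)"
      using iW jW part XAz[of i j] XBz[of i j] zAB[of i j] zBA[of j i] by auto
  qed
  have BW: "B \<subseteq> W" "W - B = U" "B \<subseteq> C" "C - B = S" using part by auto
  have pdC: "sym_pos_def_on C M" by (rule pd_subset[OF W pd]) (use WUC in auto)
  have j1: "det_on W M * det_on B P = det_on U M"
    using jacobi[OF W pd BW(1)] BW(2) unfolding P_def by simp
  have j2: "det_on C M * det_on B (inv_on C M) = det_on S M"
    using jacobi[OF fC pdC BW(3)] BW(4) by simp
  have dB: "det_on B (inv_on C M) = det_on B P"
    by (rule det_on_cong) (use BW XAz in \<open>auto simp: invC\<close>)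
  have "det_on W M * det_on S M = det_on W M * (det_on C M * det_on B P)" using j2 dB by simp
  also have "\<dots> = det_on C M * (det_on W M * det_on B P)" by (simp add: mult_ac)
  also have "\<dots> = det_on U M * det_on C M" using j1 by simp
  finally show "det_on W M * det_on S M = det_on U M * det_on C M" .
qed




lemma hist_Suc: "hist C (Suc k) = hist C k \<union> C (Suc k)"
  unfolding hist_def by (auto simp: atLeastAtMostSuc_conv)

lemma hist_1: "hist C 1 = C 1"
  unfolding hist_def by simp

lemma hist_mono: "k \<le> l \<Longrightarrow> hist C k \<subseteq> hist C l"
  unfolding hist_def by (rule UN_mono) auto

lemma in_hist: "1 \<le> j \<Longrightarrow> j \<le> k \<Longrightarrow> C j \<subseteq> hist C k"
  unfolding hist_def by auto

lemma qf_cong: "(\<And>i j. i \<in> U \<Longrightarrow> j \<in> U \<Longrightarrow> A i j = B i j) \<Longrightarrow> qf U A x = qf U B x"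
  unfolding qf_def by (intro sum.cong refl) auto

lemma qf_diff: "qf U (\<lambda>i j. a i j - b i j) x = qf U a x - qf U b x"
  unfolding qf_def by (simp add: algebra_simps sum_subtractf)

lemma qf_add: "qf U (\<lambda>i j. a i j + b i j) x = qf U a x + qf U b x"
  unfolding qf_def by (simp add: algebra_simps sum.distrib)

lemma qf_cmult: "qf U (\<lambda>i j. c * a i j) x = c * qf U a x"
  unfolding qf_def by (simp add: sum_distrib_left mult_ac)

lemma qf_sum: "qf U (\<lambda>i j. \<Sum>l\<in>L. f l i j) x = (\<Sum>l\<in>L. qf U (f l) x)"
proof -
  have "qf U (\<lambda>i j. \<Sum>l\<in>L. f l i j) x = (\<Sum>i\<in>U. \<Sum>j\<in>U. \<Sum>l\<in>L. x i * f l i j * x j)"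
    unfolding qf_def by (simp add: sum_distrib_left sum_distrib_right)
  also have "\<dots> = (\<Sum>l\<in>L. \<Sum>i\<in>U. \<Sum>j\<in>U. x i * f l i j * x j)"
    by (rule swap3[symmetric])
  finally show ?thesis unfolding qf_def .
qed

lemma qf_if: "qf U (\<lambda>i j. if P then a i j else 0) x = (if P then qf U a x else 0)"
  unfolding qf_def by simp

lemma qf_zero_out: "finite V \<Longrightarrow> T \<subseteq> V \<Longrightarrow> (\<And>i j. i \<notin> T \<or> j \<notin> T \<Longrightarrow> A i j = 0) \<Longrightarrow> qf V A x = qf T A x"
  unfolding qf_def by (subst sum2_sub[of V T]) auto

lemma qf_padm: "finite C \<Longrightarrow> T \<subseteq> C \<Longrightarrow> qf C (padm T C A) x = qf T A x"
proof -
  assume C: "finite C" and T: "T \<subseteq> C"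
  have "qf C (padm T C A) x = qf T (padm T C A) x"
    by (rule qf_zero_out[OF C T]) (auto simp: padm_def)
  also have "\<dots> = qf T A x" by (rule qf_cong) (use T in \<open>auto simp: padm_def\<close>)
  finally show ?thesis .
qed

lemma IMI_eq: "finite U \<Longrightarrow> sym_pos_def_on U M \<Longrightarrow> IminusInv M U i j = subm U idm i j - inv_on U M i j"
  unfolding IminusInv_def subm_def inv_on_subm using inv_on_zero[of U M i j] by auto

context
  fixes N K :: nat and E :: "nat set set" and C :: "nat \<Rightarrow> nat set" and M :: "nat \<Rightarrow> nat \<Rightarrow> real"
  assumes pf: "perfect_max_clique_seq {1..N} E C K"
    and pd: "sym_pos_def_on {1..N} M" and mk: "markov {1..N} E M"
begin

lemma K1: "1 \<le> K" using pf unfolding perfect_max_clique_seq_def by simp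

lemma Cmax: "k \<in> {1..K} \<Longrightarrow> max_clique {1..N} E (C k)"
  using pf unfolding perfect_max_clique_seq_def by blast

lemma C_sub: "k \<in> {1..K} \<Longrightarrow> C k \<subseteq> {1..N}"
  using Cmax unfolding max_clique_def clique_def by blast

lemma C_clique: "k \<in> {1..K} \<Longrightarrow> i \<in> C k \<Longrightarrow> j \<in> C k \<Longrightarrow> i \<noteq> j \<Longrightarrow> {i, j} \<in> E"
  using Cmax unfolding max_clique_def clique_def by blast

lemma maxcl_ex:
  assumes W: "clique {1..N} E W"
  shows "\<exists>k\<in>{1..K}. W \<subseteq> C k"
proof -
  let ?F = "{W'. clique {1..N} E W' \<and> W \<subseteq> W'}"
  have fin: "finite ?F"
    by (rule finite_subset[of _ "Pow {1..N}"]) (auto simp: clique_def)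
  have ne: "?F \<noteq> {}" using W by blast
  obtain m where m: "m \<in> ?F" and mx: "\<forall>b\<in>?F. m \<le> b \<longrightarrow> m = b"
    using finite_has_maximal[OF fin ne] by blast
  have "max_clique {1..N} E m"
    unfolding max_clique_def using m mx by blast
  then have "m \<in> C ` {1..K}" using pf unfolding perfect_max_clique_seq_def by blast
  then show ?thesis using m by blast
qed

lemma hist_sub: "k \<le> K \<Longrightarrow> hist C k \<subseteq> {1..N}"
  unfolding hist_def using C_sub by (intro UN_least) auto

lemma cover: "hist C K = {1..N}"
proof
  show "hist C K \<subseteq> {1..N}" by (rule hist_sub) simp
  show "{1..N} \<subseteq> hist C K"
  proof
    fix v assume v: "v \<in> {1..N}"
    have "clique {1..N} E {v}" using v unfolding clique_def by auto
    then obtain k where "k \<in> {1..K}" "{v} \<subseteq> C k" using maxcl_ex by blast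
    then show "v \<in> hist C K" unfolding hist_def by auto
  qed
qed

lemma edge_in:
  assumes "i \<in> {1..N}" "j \<in> {1..N}" "i \<noteq> j" "{i, j} \<in> E"
  shows "\<exists>k\<in>{1..K}. {i, j} \<subseteq> C k"
proof -
  have "clique {1..N} E {i, j}" using assms unfolding clique_def by (auto simp: insert_commute)
  then show ?thesis by (rule maxcl_ex)
qed

lemma chase: "j \<in> {1..K} \<Longrightarrow> T \<subseteq> C j \<Longrightarrow> T \<subseteq> hist C k \<Longrightarrow> 1 \<le> k \<Longrightarrow> \<exists>j'\<in>{1..k}. T \<subseteq> C j'"
proof (induction j rule: less_induct)
  case (less j)
  show ?case
  proof (cases "j \<le> k")
    case True then show ?thesis using less.prems by auto
  next
    case False
    then have j2: "j \<in> {2..K}" using less.prems by auto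
    then obtain q where q: "q \<in> {1..<j}" "sep C j \<subseteq> C q"
      using pf unfolding perfect_max_clique_seq_def by blast
    have "hist C k \<subseteq> hist C (j - 1)" using False by (intro hist_mono) auto
    then have "T \<subseteq> sep C j" using less.prems unfolding sep_def by auto
    then have "T \<subseteq> C q" using q by auto
    then show ?thesis using less.IH[of q] q less.prems j2 by auto
  qed
qed

lemma qidx_prop: "l \<in> {2..K} \<Longrightarrow> sep C l \<subseteq> C (qidx C l) \<and> 1 \<le> qidx C l \<and> qidx C l < l"
proof -
  assume l: "l \<in> {2..K}"
  then obtain j where j: "j \<in> {1..<l}" "sep C l \<subseteq> C j"
    using pf unfolding perfect_max_clique_seq_def by blast
  have P: "1 \<le> qidx C l \<and> sep C l \<subseteq> C (qidx C l)"
    unfolding qidx_def by (rule LeastI[of _ j]) (use j in auto)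
  have "qidx C l \<le> j" unfolding qidx_def by (rule Least_le) (use j in auto)
  then show ?thesis using P j by auto
qed

definition MK :: "nat \<Rightarrow> bool" where
  "MK k \<longleftrightarrow> (\<forall>i\<in>hist C k. \<forall>j\<in>hist C k. i \<noteq> j \<and> {i, j} \<notin> E \<longrightarrow> inv_on (hist C k) M i j = 0)"

lemma MK_K: "MK K"
  using mk unfolding MK_def markov_def cover inv_on_subm by blast

lemma fin_hist: "k \<le> K \<Longrightarrow> finite (hist C k)"
  using hist_sub by (auto intro: finite_subset)

lemma pd_of: "U \<subseteq> {1..N} \<Longrightarrow> sym_pos_def_on U M"
  by (rule pd_subset[OF _ pd]) auto

lemma zero_cond:
  assumes k: "k \<in> {2..K}" and mkk: "MK k"
    and a: "a \<in> hist C (k - 1) - sep C k" and b: "b \<in> C k - sep C k"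
  shows "inv_on (hist C k) M a b = 0"
proof -
  have hk: "hist C k = hist C (k - 1) \<union> C k" using hist_Suc[of C "k - 1"] k by simp
  have bnot: "b \<notin> hist C (k - 1)" using b unfolding sep_def by auto
  have ab: "a \<in> hist C k" "b \<in> hist C k" "a \<noteq> b" using a b bnot hk by auto
  have aV: "a \<in> {1..N}" "b \<in> {1..N}" using ab hist_sub[of k] k by auto
  have "{a, b} \<notin> E"
  proof
    assume e: "{a, b} \<in> E"
    obtain j where j: "j \<in> {1..K}" "{a, b} \<subseteq> C j" using edge_in[OF aV ab(3) e] by blast
    have "\<exists>j'\<in>{1..k}. {a, b} \<subseteq> C j'" by (rule chase[OF j(1) j(2)]) (use ab k in auto)
    then obtain j' where j': "j' \<in> {1..k}" "{a, b} \<subseteq> C j'" by blast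
    have "j' = k"
    proof (rule ccontr)
      assume "j' \<noteq> k"
      then have "C j' \<subseteq> hist C (k - 1)" using j' by (intro in_hist) auto
      then show False using j' bnot by auto
    qed
    then have "a \<in> sep C k" using j' a unfolding sep_def by auto
    then show False using a by auto
  qed
  then show ?thesis using mkk ab unfolding MK_def by blast
qed

lemma glue_step:
  assumes k: "k \<in> {2..K}" and mkk: "MK k"
  shows "inv_on (hist C k) M i j = inv_on (hist C (k - 1)) M i j + inv_on (C k) M i j - inv_on (sep C k) M i j"
    and "det_on (hist C k) M * det_on (sep C k) M = det_on (hist C (k - 1)) M * det_on (C k) M"
proof -
  have hk: "hist C k = hist C (k - 1) \<union> C k" using hist_Suc[of C "k - 1"] k by simp
  have W: "finite (hist C k)" by (rule fin_hist) (use k in auto)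
  have pdW: "sym_pos_def_on (hist C k) M" using hist_sub[of k] k by (intro pd_of) auto
  have S: "sep C k = hist C (k - 1) \<inter> C k" unfolding sep_def ..
  note g = glue[OF W pdW hk S zero_cond[OF k mkk]]
  show "inv_on (hist C k) M i j = inv_on (hist C (k - 1)) M i j + inv_on (C k) M i j - inv_on (sep C k) M i j"
    by (rule g(1))
  show "det_on (hist C k) M * det_on (sep C k) M = det_on (hist C (k - 1)) M * det_on (C k) M"
    by (rule g(2))
qed

lemma MK_down:
  assumes k: "k \<in> {2..K}" and mkk: "MK k"
  shows "MK (k - 1)"
  unfolding MK_def
proof (intro ballI impI)
  fix i j assume i: "i \<in> hist C (k - 1)" and j: "j \<in> hist C (k - 1)" and ne: "i \<noteq> j \<and> {i, j} \<notin> E"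
  have hk: "hist C k = hist C (k - 1) \<union> C k" using hist_Suc[of C "k - 1"] k by simp
  have kK: "k \<in> {1..K}" using k by auto
  have fC: "finite (C k)" using C_sub[OF kK] by (auto intro: finite_subset)
  have pdC: "sym_pos_def_on (C k) M" using C_sub[OF kK] by (rule pd_of)
  have Sk: "sep C k \<subseteq> C k" unfolding sep_def by auto
  have fS: "finite (sep C k)" using fC Sk by (auto intro: finite_subset)
  have pdS: "sym_pos_def_on (sep C k) M" using C_sub[OF kK] Sk by (intro pd_of) auto
  have notboth: "i \<notin> C k \<or> j \<notin> C k" using C_clique[OF kK] ne by blast
  have z1: "inv_on (hist C k) M i j = 0" using mkk i j ne hk unfolding MK_def by blast
  have z2: "inv_on (C k) M i j = 0" by (rule inv_on_zero[OF fC pdC notboth])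
  have z3: "inv_on (sep C k) M i j = 0" using notboth Sk by (intro inv_on_zero[OF fS pdS]) auto
  show "inv_on (hist C (k - 1)) M i j = 0" using glue_step(1)[OF k mkk, of i j] z1 z2 z3 by simp
qed

lemma MK_all: "k \<in> {1..K} \<Longrightarrow> MK k"
proof (induction "K - k" arbitrary: k)
  case 0 then have "k = K" by auto
  then show ?case using MK_K by simp
next
  case (Suc n)
  then have "MK (Suc k)" by (intro Suc.hyps(1)) auto
  moreover have "Suc k \<in> {2..K}" using Suc by auto
  ultimately show ?case using MK_down[of "Suc k"] by simp
qed

lemma det_pos_of: "U \<subseteq> {1..N} \<Longrightarrow> det_on U M > 0"
  by (rule det_pos[OF _ pd_of]) (auto intro: finite_subset)

lemma ldet_eq: "ldet M U = ln (det_on U M)"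
  unfolding ldet_def det_on_subm ..

lemma subm_glue: "W = U \<union> C' \<Longrightarrow> S = U \<inter> C' \<Longrightarrow> subm W idm i j = subm U idm i j + subm C' idm i j - subm S idm i j"
  by (auto simp: subm_def idm_def)

lemma INVDET:
  "k \<in> {1..K} \<Longrightarrow> (\<forall>i j. IminusInv M (hist C k) i j = (\<Sum>l=1..k. IminusInv M (C l) i j) - (\<Sum>l=2..k. IminusInv M (sep C l) i j))
     \<and> ldet M (hist C k) = (\<Sum>l=1..k. ldet M (C l)) - (\<Sum>l=2..k. ldet M (sep C l))"
proof (induction k)
  case 0 then show ?case by simp
next
  case (Suc k)
  show ?case
  proof (cases "k = 0")
    case True then show ?thesis by (simp add: hist_def)
  next
    case False
    then have kK: "k \<in> {1..K}" and k2: "Suc k \<in> {2..K}" and kK1: "Suc k \<in> {1..K}" using Suc.prems by auto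
    note IH = Suc.IH[OF kK]
    have mkk: "MK (Suc k)" by (rule MK_all[OF kK1])
    have hk: "hist C (Suc k) = hist C k \<union> C (Suc k)" by (rule hist_Suc)
    have S: "sep C (Suc k) = hist C k \<inter> C (Suc k)" unfolding sep_def by simp
    have subs: "hist C (Suc k) \<subseteq> {1..N}" "hist C k \<subseteq> {1..N}" "C (Suc k) \<subseteq> {1..N}" "sep C (Suc k) \<subseteq> {1..N}"
      using hist_sub[of "Suc k"] hist_sub[of k] C_sub[OF kK1] kK1 kK unfolding S by auto
    have fins: "finite (hist C (Suc k))" "finite (hist C k)" "finite (C (Suc k))" "finite (sep C (Suc k))"
      using subs by (auto intro: finite_subset)
    have pds: "sym_pos_def_on (hist C (Suc k)) M" "sym_pos_def_on (hist C k) M" "sym_pos_def_on (C (Suc k)) M" "sym_pos_def_on (sep C (Suc k)) M"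
      using pd_of[OF subs(1)] pd_of[OF subs(2)] pd_of[OF subs(3)] pd_of[OF subs(4)] by auto
    have g1: "inv_on (hist C (Suc k)) M i j = inv_on (hist C k) M i j + inv_on (C (Suc k)) M i j - inv_on (sep C (Suc k)) M i j" for i j
      using glue_step(1)[OF k2 mkk, of i j] by simp
    have g2: "det_on (hist C (Suc k)) M * det_on (sep C (Suc k)) M = det_on (hist C k) M * det_on (C (Suc k)) M"
      using glue_step(2)[OF k2 mkk] by simp
    have imi: "IminusInv M (hist C (Suc k)) i j = IminusInv M (hist C k) i j + IminusInv M (C (Suc k)) i j - IminusInv M (sep C (Suc k)) i j" for i j
      using IMI_eq[OF fins(1) pds(1)] IMI_eq[OF fins(2) pds(2)] IMI_eq[OF fins(3) pds(3)] IMI_eq[OF fins(4) pds(4)]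
        subm_glue[OF hk S, of i j] g1[of i j] by simp
    have pos: "det_on (hist C (Suc k)) M > 0" "det_on (hist C k) M > 0" "det_on (C (Suc k)) M > 0" "det_on (sep C (Suc k)) M > 0"
      using det_pos_of[OF subs(1)] det_pos_of[OF subs(2)] det_pos_of[OF subs(3)] det_pos_of[OF subs(4)] by auto
    have "ln (det_on (hist C (Suc k)) M) + ln (det_on (sep C (Suc k)) M) = ln (det_on (hist C k) M) + ln (det_on (C (Suc k)) M)"
      using g2 pos ln_mult[of "det_on (hist C (Suc k)) M" "det_on (sep C (Suc k)) M"]
        ln_mult[of "det_on (hist C k) M" "det_on (C (Suc k)) M"] by simp
    then have ld: "ldet M (hist C (Suc k)) = ldet M (hist C k) + ldet M (C (Suc k)) - ldet M (sep C (Suc k))"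
      unfolding ldet_eq by simp
    show ?thesis using IH imi ld False by simp
  qed
qed

end




lemma coeff_sum:
  assumes img: "qidx C ` {2..K} \<subseteq> {1..K}"
    and ab: "\<forall>k\<in>{2..K}. \<alpha> k + \<beta> k = 1"
  shows "(\<Sum>k\<in>{1..K}. \<Sum>l\<in>Qset C K k. \<beta> l * G l) + (\<Sum>k\<in>{1..K}. if 2 \<le> k then \<alpha> k * G k else (0::real))
       = (\<Sum>l\<in>{2..K}. G l)"
proof -
  have 1: "(\<Sum>k\<in>{1..K}. \<Sum>l\<in>Qset C K k. \<beta> l * G l) = (\<Sum>l\<in>{2..K}. \<beta> l * G l)"
    unfolding Qset_def by (rule sum.group[OF _ _ img]) auto
  have 2: "(\<Sum>k\<in>{1..K}. if 2 \<le> k then \<alpha> k * G k else (0::real)) = (\<Sum>l\<in>{2..K}. \<alpha> l * G l)"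
  proof -
    have "(\<Sum>k\<in>{1..K}. if 2 \<le> k then \<alpha> k * G k else (0::real)) = (\<Sum>k\<in>{k\<in>{1..K}. 2 \<le> k}. \<alpha> k * G k)"
      by (rule sum.inter_filter[symmetric]) simp
    also have "{k\<in>{1..K}. 2 \<le> k} = {2..K}" by auto
    finally show ?thesis .
  qed
  have "(\<Sum>l\<in>{2..K}. \<beta> l * G l) + (\<Sum>l\<in>{2..K}. \<alpha> l * G l) = (\<Sum>l\<in>{2..K}. (\<alpha> l + \<beta> l) * G l)"
    by (simp add: sum.distrib[symmetric] algebra_simps)
  also have "\<dots> = (\<Sum>l\<in>{2..K}. G l)" using ab by simp
  finally show ?thesis using 1 2 by simp
qed

theorem mainTheorem1:
  fixes N K :: nat and E :: "nat set set" and C :: "nat \<Rightarrow> nat set"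
    and \<Sigma> :: "nat \<Rightarrow> nat \<Rightarrow> real" and \<alpha> \<beta> :: "nat \<Rightarrow> real" and x :: "nat \<Rightarrow> real"
  assumes "ugraph {1..N} E"
    and "perfect_max_clique_seq {1..N} E C K"
    and "sym_pos_def_on {1..N} \<Sigma>"
    and "markov {1..N} E \<Sigma>"
    and "\<forall>k\<in>{2..K}. \<alpha> k + \<beta> k = 1"
  shows "Tstat {1..N} \<Sigma> x = (\<Sum>k\<in>{1..K}. Lloc C K \<Sigma> \<alpha> \<beta> k x)"
proof -
  note pf = assms(2) and pd = assms(3) and mk = assms(4) and ab = assms(5)
  have img: "qidx C ` {2..K} \<subseteq> {1..K}"
  proof
    fix y assume "y \<in> qidx C ` {2..K}"
    then obtain l where l: "l \<in> {2..K}" "y = qidx C l" by blast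
    then show "y \<in> {1..K}" using qidx_prop[OF pf pd mk l(1)] by auto
  qed
  define V where "V = {1..N}"
  define F where "F = (\<lambda>U. qf U (IminusInv \<Sigma> U) x)"
  have fV: "finite V" unfolding V_def by simp
  have KK: "K \<in> {1..K}" using K1[OF pf pd mk] by simp
  have hK: "hist C K = V" unfolding V_def by (rule cover[OF pf pd mk])
  note ID = INVDET[OF pf pd mk KK, unfolded hK]
  have CV: "C l \<subseteq> V" if "l \<in> {1..K}" for l unfolding V_def by (rule C_sub[OF pf pd mk that])
  have SC: "sep C l \<subseteq> C l" for l unfolding sep_def by auto
  have IMIz: "IminusInv \<Sigma> U i j = 0" if "i \<notin> U \<or> j \<notin> U" for U i j
    using that unfolding IminusInv_def by auto
  have A: "Tstat V \<Sigma> x = F V - ldet \<Sigma> V"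
  proof -
    have "F V = qf V (\<lambda>i j. idm i j - inv_on V (subm V \<Sigma>) i j) x"
      unfolding F_def by (rule qf_cong) (simp add: IminusInv_def inv_on_subm)
    then show ?thesis unfolding Tstat_def qf_diff by simp
  qed
  have B: "F V = (\<Sum>l=1..K. F (C l)) - (\<Sum>l=2..K. F (sep C l))"
  proof -
    have "IminusInv \<Sigma> V = (\<lambda>i j. (\<Sum>l=1..K. IminusInv \<Sigma> (C l) i j) - (\<Sum>l=2..K. IminusInv \<Sigma> (sep C l) i j))"
      using ID by (simp add: fun_eq_iff)
    then have "F V = (\<Sum>l=1..K. qf V (IminusInv \<Sigma> (C l)) x) - (\<Sum>l=2..K. qf V (IminusInv \<Sigma> (sep C l)) x)"
      unfolding F_def by (simp only: qf_diff qf_sum)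
    also have "(\<Sum>l=1..K. qf V (IminusInv \<Sigma> (C l)) x) = (\<Sum>l=1..K. F (C l))"
      unfolding F_def by (intro sum.cong refl qf_zero_out[OF fV] CV IMIz) auto
    also have "(\<Sum>l=2..K. qf V (IminusInv \<Sigma> (sep C l)) x) = (\<Sum>l=2..K. F (sep C l))"
      unfolding F_def
    proof (intro sum.cong refl qf_zero_out[OF fV] IMIz)
      fix l assume "l \<in> {2..K}"
      then show "sep C l \<subseteq> V" using CV[of l] SC[of l] by auto
    qed auto
    finally show ?thesis .
  qed
  have J: "qf (C k) (Jloc C K \<Sigma> \<alpha> \<beta> k) x = F (C k) - (\<Sum>l\<in>Qset C K k. \<beta> l * F (sep C l))
             - (if 2 \<le> k then \<alpha> k * F (sep C k) else 0)" if k: "k \<in> {1..K}" for k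
  proof -
    have fC: "finite (C k)" using CV[OF k] fV by (auto intro: finite_subset)
    have "qf (C k) (Jloc C K \<Sigma> \<alpha> \<beta> k) x = qf (C k) (IminusInv \<Sigma> (C k)) x
       - (\<Sum>l\<in>Qset C K k. \<beta> l * qf (C k) (padm (sep C l) (C k) (IminusInv \<Sigma> (sep C l))) x)
       - (if 2 \<le> k then \<alpha> k * qf (C k) (padm (sep C k) (C k) (IminusInv \<Sigma> (sep C k))) x else 0)"
      unfolding Jloc_def by (simp only: qf_diff qf_sum qf_cmult qf_if)
    also have "(\<Sum>l\<in>Qset C K k. \<beta> l * qf (C k) (padm (sep C l) (C k) (IminusInv \<Sigma> (sep C l))) x)
        = (\<Sum>l\<in>Qset C K k. \<beta> l * F (sep C l))"
    proof (intro sum.cong refl arg_cong2[where f="(*)"])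
      fix l assume "l \<in> Qset C K k"
      then have "l \<in> {2..K}" "qidx C l = k" unfolding Qset_def by auto
      then have "sep C l \<subseteq> C k" using qidx_prop[OF pf pd mk] by metis
      then show "qf (C k) (padm (sep C l) (C k) (IminusInv \<Sigma> (sep C l))) x = F (sep C l)"
        unfolding F_def by (rule qf_padm[OF fC])
    qed
    also have "qf (C k) (padm (sep C k) (C k) (IminusInv \<Sigma> (sep C k))) x = F (sep C k)"
      unfolding F_def by (rule qf_padm[OF fC SC])
    finally show ?thesis unfolding F_def .
  qed
  have L: "(\<Sum>k\<in>{1..K}. Lloc C K \<Sigma> \<alpha> \<beta> k x)
      = ((\<Sum>k\<in>{1..K}. F (C k)) - (\<Sum>l\<in>{2..K}. F (sep C l)))
        - ((\<Sum>k\<in>{1..K}. ldet \<Sigma> (C k)) - (\<Sum>l\<in>{2..K}. ldet \<Sigma> (sep C l)))"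
  proof -
    have "(\<Sum>k\<in>{1..K}. Lloc C K \<Sigma> \<alpha> \<beta> k x)
      = (\<Sum>k\<in>{1..K}. (F (C k) - (\<Sum>l\<in>Qset C K k. \<beta> l * F (sep C l)) - (if 2 \<le> k then \<alpha> k * F (sep C k) else 0))
           - (ldet \<Sigma> (C k) - (\<Sum>l\<in>Qset C K k. \<beta> l * ldet \<Sigma> (sep C l)) - (if 2 \<le> k then \<alpha> k * ldet \<Sigma> (sep C k) else 0)))"
      unfolding Lloc_def eloc_def using J by (intro sum.cong refl) auto
    also have "\<dots> = ((\<Sum>k\<in>{1..K}. F (C k)) - ((\<Sum>k\<in>{1..K}. \<Sum>l\<in>Qset C K k. \<beta> l * F (sep C l)) + (\<Sum>k\<in>{1..K}. if 2 \<le> k then \<alpha> k * F (sep C k) else 0)))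
        - ((\<Sum>k\<in>{1..K}. ldet \<Sigma> (C k)) - ((\<Sum>k\<in>{1..K}. \<Sum>l\<in>Qset C K k. \<beta> l * ldet \<Sigma> (sep C l)) + (\<Sum>k\<in>{1..K}. if 2 \<le> k then \<alpha> k * ldet \<Sigma> (sep C k) else 0)))"
      by (simp add: sum_subtractf sum.distrib)
    also have "\<dots> = ((\<Sum>k\<in>{1..K}. F (C k)) - (\<Sum>l\<in>{2..K}. F (sep C l)))
        - ((\<Sum>k\<in>{1..K}. ldet \<Sigma> (C k)) - (\<Sum>l\<in>{2..K}. ldet \<Sigma> (sep C l)))"
      unfolding coeff_sum[OF img ab] ..
    finally show ?thesis .
  qed
  show ?thesis using A B L ID unfolding V_def by simp
qed


end
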